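(* Let $\varepsilon\in(0,1]$, $n\ge1$, and let $W$ be a random channel drawn from $\mathcal{W}_{Q,\varepsilon}$. With probability at least $3/4$, every bipartite independent set $(A,B)$ of $G_{W,n}$ satisfies $$\frac1n\log_2(|A||B|)\le q+\log_2\frac{3}{\varepsilon}.$$
   Context: Fix an integer $q\ge1$, $Q=2^q$, $[Q]=\{1,\dots,Q\}$, and a symbol $\phi\notin[Q]$. $\mathcal{W}_{Q,\varepsilon}$ is the distribution over functions $W:[Q]^2\to([Q]\cup\{\phi\})^2$ in which, independently for every $(x,y)\in[Q]^2$, $W(x,y)=(\phi,\phi)$ with probability $\varepsilon$ and $W(x,y)=(x,y)$ otherwise. $G_{W,n}$ is the bipartite graph whose two sides are two copies of $[Q]^n$, with $x^{(n)}=(x_1,\dots,x_n)$ (left) adjacent to $y^{(n)}=(y_1,\dots,y_n)$ (right) iff there is an index $i$ with $W(x_i,y_i)=(\phi,\phi)$. In a bipartite graph with sides $X,Y$, a bipartite independent set (BPIS) is a pair $(A,B)$ with $A\subseteq X$, $B\subseteq Y$ and no edge between $A$ and $B$; its size is $|A|\cdot|B|$. *)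

theory Defs
  imports "HOL-Probability.Probability"
begin

text \<open>The extra symbol phi is encoded as None; a symbol x in [Q] as Some x.
  A channel is a function W :: nat \<times> nat \<Rightarrow> nat option \<times> nat option,
  relevant on [Q]^2 = {1..Q} \<times> {1..Q}.\<close>

definition erase_channel :: "(nat \<times> nat \<Rightarrow> bool) \<Rightarrow> nat \<times> nat \<Rightarrow> nat option \<times> nat option" where
  "erase_channel e = (\<lambda>(x, y). if e (x, y) then (None, None) else (Some x, Some y))"

definition W_dist :: "nat \<Rightarrow> real \<Rightarrow> (nat \<times> nat \<Rightarrow> nat option \<times> nat option) pmf" where
  "W_dist Q \<epsilon> = map_pmf erase_channel
      (Pi_pmf ({1..Q} \<times> {1..Q}) False (\<lambda>_. bernoulli_pmf \<epsilon>))"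

definition words :: "nat \<Rightarrow> nat \<Rightarrow> nat list set" where
  "words Q n = {xs. length xs = n \<and> set xs \<subseteq> {1..Q}}"

definition G_adj :: "(nat \<times> nat \<Rightarrow> nat option \<times> nat option) \<Rightarrow> nat \<Rightarrow> nat list \<Rightarrow> nat list \<Rightarrow> bool" where
  "G_adj W n xs ys \<longleftrightarrow> (\<exists>i<n. W (xs ! i, ys ! i) = (None, None))"

definition is_BPIS :: "(nat \<times> nat \<Rightarrow> nat option \<times> nat option) \<Rightarrow> nat \<Rightarrow> nat \<Rightarrow> nat list set \<Rightarrow> nat list set \<Rightarrow> bool" where
  "is_BPIS W Q n A B \<longleftrightarrow> A \<subseteq> words Q n \<and> B \<subseteq> words Q n \<and>
     (\<forall>a\<in>A. \<forall>b\<in>B. \<not> G_adj W n a b)"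

end

theory Submission
  imports Defs
begin

lemma finite_words: "finite (words Q n)"
proof -
  have "words Q n = {xs. set xs \<subseteq> {1..Q} \<and> length xs = n}" unfolding words_def by auto
  then show ?thesis using finite_lists_length_eq[of "{1..Q}" n] by simp
qed

lemma card_proj_le:
  assumes "A \<subseteq> words Q n"
  shows "card A \<le> (\<Prod>i<n. card ((\<lambda>xs. xs ! i) ` A))"
proof -
  let ?f = "\<lambda>xs. restrict (\<lambda>i. xs ! i) {..<n}"
  have fA: "finite A" using assms finite_words finite_subset by blast
  have len: "\<And>xs. xs \<in> A \<Longrightarrow> length xs = n" using assms unfolding words_def by auto
  have inj: "inj_on ?f A"
  proof
    fix x y assume x: "x \<in> A" and y: "y \<in> A" and e: "?f x = ?f y"
    show "x = y"
    proof (rule nth_equalityI)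
      show "length x = length y" using len x y by simp
      fix i assume "i < length x"
      then have "i < n" using len x by simp
      then show "x ! i = y ! i" using fun_cong[OF e, of i] by simp
    qed
  qed
  have sub: "?f ` A \<subseteq> PiE {..<n} (\<lambda>i. (\<lambda>xs. xs ! i) ` A)"
    by (auto simp: PiE_def extensional_def)
  have fin: "finite (PiE {..<n} (\<lambda>i. (\<lambda>xs. xs ! i) ` A))"
    using fA by (intro finite_PiE) auto
  have "card A = card (?f ` A)" using card_image[OF inj] by simp
  also have "\<dots> \<le> card (PiE {..<n} (\<lambda>i. (\<lambda>xs. xs ! i) ` A))"
    by (rule card_mono[OF fin sub])
  also have "\<dots> = (\<Prod>i<n. card ((\<lambda>xs. xs ! i) ` A))" by (simp add: card_PiE)
  finally show ?thesis .
qed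

lemma BPIS_bound:
  fixes M :: real
  assumes good: "\<forall>S T. S \<subseteq> {1..Q} \<longrightarrow> T \<subseteq> {1..Q} \<longrightarrow>
                   (\<forall>x\<in>S. \<forall>y\<in>T. W (x, y) \<noteq> (None, None)) \<longrightarrow> real (card S * card T) \<le> M"
    and M: "M \<ge> 1" and n: "n \<ge> 1"
    and bp: "is_BPIS W Q n A B"
  shows "log 2 (real (card A * card B)) / real n \<le> log 2 M"
proof -
  have Aw: "A \<subseteq> words Q n" and Bw: "B \<subseteq> words Q n"
    and noadj: "\<forall>a\<in>A. \<forall>b\<in>B. \<not> G_adj W n a b" using bp unfolding is_BPIS_def by auto
  define Ai where "Ai i = (\<lambda>xs. xs ! i) ` A" for i
  define Bi where "Bi i = (\<lambda>xs. xs ! i) ` B" for i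
  have each: "real (card (Ai i) * card (Bi i)) \<le> M" if i: "i < n" for i
  proof -
    have "Ai i \<subseteq> {1..Q}" using Aw i unfolding Ai_def words_def by (force dest: nth_mem)
    moreover have "Bi i \<subseteq> {1..Q}" using Bw i unfolding Bi_def words_def by (force dest: nth_mem)
    moreover have "\<forall>x\<in>Ai i. \<forall>y\<in>Bi i. W (x, y) \<noteq> (None, None)"
      using noadj i unfolding Ai_def Bi_def G_adj_def by auto
    ultimately show ?thesis using good by blast
  qed
  have "real (card A * card B) \<le> (\<Prod>i<n. real (card (Ai i))) * (\<Prod>i<n. real (card (Bi i)))"
  proof -
    have "card A \<le> (\<Prod>i<n. card (Ai i))" using card_proj_le[OF Aw] unfolding Ai_def .
    moreover have "card B \<le> (\<Prod>i<n. card (Bi i))" using card_proj_le[OF Bw] unfolding Bi_def .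
    ultimately have "card A * card B \<le> (\<Prod>i<n. card (Ai i)) * (\<Prod>i<n. card (Bi i))"
      by (rule mult_le_mono)
    then show ?thesis by (metis of_nat_le_iff of_nat_mult of_nat_prod)
  qed
  also have "\<dots> = (\<Prod>i<n. real (card (Ai i) * card (Bi i)))"
    by (simp add: prod.distrib)
  also have "\<dots> \<le> (\<Prod>i<n. M)"
    by (rule prod_mono) (use each in auto)
  also have "\<dots> = M ^ n" by simp
  finally have le: "real (card A * card B) \<le> M ^ n" .
  show ?thesis
  proof (cases "card A * card B = 0")
    case True
    then show ?thesis using M by (auto simp: log_def)
  next
    case False
    then have pos: "real (card A * card B) > 0" by simp
    have "log 2 (real (card A * card B)) \<le> log 2 (M ^ n)"
      using le pos by simp
    also have "\<dots> = real n * log 2 M" using M by (simp add: log_nat_power)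
    finally show ?thesis using n by (simp add: divide_le_eq mult.commute)
  qed
qed

lemma prob_rect:
  fixes \<epsilon> :: real and Q :: nat
  assumes e: "0 \<le> \<epsilon>" "\<epsilon> \<le> 1" and S: "S \<subseteq> {1..Q}" and T: "T \<subseteq> {1..Q}"
  shows "measure_pmf.prob (Pi_pmf ({1..Q} \<times> {1..Q}) False (\<lambda>_. bernoulli_pmf \<epsilon>))
           {e. \<forall>x\<in>S. \<forall>y\<in>T. \<not> e (x, y)} = (1 - \<epsilon>) ^ (card S * card T)"
proof -
  let ?I = "{1..Q} \<times> {1..Q}"
  have eq: "{e. \<forall>x\<in>S. \<forall>y\<in>T. \<not> e (x, y)} = Pi ?I (\<lambda>z. if z \<in> S \<times> T then {False} else UNIV)"
    using S T by (auto simp: Pi_def subset_iff)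
  have "measure_pmf.prob (Pi_pmf ?I False (\<lambda>_. bernoulli_pmf \<epsilon>)) (Pi ?I (\<lambda>z. if z \<in> S \<times> T then {False} else UNIV))
      = (\<Prod>z\<in>?I. measure_pmf.prob (bernoulli_pmf \<epsilon>) (if z \<in> S \<times> T then {False} else UNIV))"
    by (rule measure_Pi_pmf_Pi) (simp add: finite_cartesian_product)
  also have "\<dots> = (\<Prod>z\<in>?I. if z \<in> S \<times> T then 1 - \<epsilon> else 1)"
    by (rule prod.cong) (use e in \<open>auto simp: measure_pmf_single\<close>)
  also have "\<dots> = (\<Prod>z\<in>S \<times> T. 1 - \<epsilon>)"
  proof -
    have i: "?I \<inter> S \<times> T = S \<times> T" using S T by blast
    show ?thesis using i by (subst prod.If_cases) simp_all
  qed
  also have "\<dots> = (1 - \<epsilon>) ^ (card S * card T)" by (simp add: card_cartesian_product)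
  finally show ?thesis using eq by simp
qed

theorem proposition2:
  fixes q n :: nat and \<epsilon> :: real
  assumes "q \<ge> 1" and "0 < \<epsilon>" and "\<epsilon> \<le> 1" and "n \<ge> 1"
  shows "measure_pmf.prob (W_dist (2 ^ q) \<epsilon>)
           {W. \<forall>A B. is_BPIS W (2 ^ q) n A B \<longrightarrow>
                 log 2 (real (card A * card B)) / real n \<le> real q + log 2 (3 / \<epsilon>)}
         \<ge> 3 / 4"
proof -
  define Q :: nat where "Q = 2 ^ q"
  have Q2: "Q \<ge> 2"
  proof -
    have "(2::nat) ^ 1 \<le> 2 ^ q" by (rule power_increasing) (use assms(1) in auto)
    then show ?thesis unfolding Q_def by simp
  qed
  define M :: real where "M = real Q * (3 / \<epsilon>)"
  have M1: "M \<ge> 1"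
  proof -
    have "3 / \<epsilon> \<ge> 1" using assms(2,3) by (simp add: le_divide_eq)
    moreover have "real Q \<ge> 1" using Q2 by simp
    ultimately have "1 * 1 \<le> real Q * (3 / \<epsilon>)" by (intro mult_mono) auto
    then show ?thesis unfolding M_def by simp
  qed
  have logM: "log 2 M = real q + log 2 (3 / \<epsilon>)"
  proof -
    have "log 2 M = log 2 (real Q) + log 2 (3 / \<epsilon>)"
      unfolding M_def using assms(2) Q2 by (intro log_mult_pos) auto
    moreover have "log 2 (real Q) = real q" unfolding Q_def by (simp add: log_nat_power)
    ultimately show ?thesis by simp
  qed
  define p where "p = Pi_pmf ({1..Q} \<times> {1..Q}) False (\<lambda>_. bernoulli_pmf \<epsilon>)"
  define P where "P = {(S, T). S \<subseteq> {1..Q} \<and> T \<subseteq> {1..Q} \<and> real (card S * card T) > M}"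
  define E where "E = (\<lambda>(S::nat set, T::nat set). {e. \<forall>x\<in>S. \<forall>y\<in>T. \<not> e (x, y)})"
  define U where "U = (\<Union>st\<in>P. E st)"
  let ?G = "{W. \<forall>A B. is_BPIS W Q n A B \<longrightarrow>
                 log 2 (real (card A * card B)) / real n \<le> real q + log 2 (3 / \<epsilon>)}"
  have sub: "UNIV - U \<subseteq> erase_channel -` ?G"
  proof
    fix e assume eU: "e \<in> UNIV - U"
    have erase: "erase_channel e (x, y) = (None, None) \<longleftrightarrow> e (x, y)" for x y
      by (simp add: erase_channel_def)
    have good: "\<forall>S T. S \<subseteq> {1..Q} \<longrightarrow> T \<subseteq> {1..Q} \<longrightarrow>
        (\<forall>x\<in>S. \<forall>y\<in>T. erase_channel e (x, y) \<noteq> (None, None)) \<longrightarrow> real (card S * card T) \<le> M"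
    proof (intro allI impI)
      fix S T assume S: "S \<subseteq> {1..Q}" and T: "T \<subseteq> {1..Q}"
        and no: "\<forall>x\<in>S. \<forall>y\<in>T. erase_channel e (x, y) \<noteq> (None, None)"
      show "real (card S * card T) \<le> M"
      proof (rule ccontr)
        assume "\<not> ?thesis"
        then have "(S, T) \<in> P" using S T unfolding P_def by auto
        moreover have "e \<in> E (S, T)" using no erase unfolding E_def by auto
        ultimately show False using eU unfolding U_def by auto
      qed
    qed
    show "e \<in> erase_channel -` ?G"
      using BPIS_bound[OF good M1 assms(4)] logM by auto
  qed
  have finP: "finite P"
    by (rule finite_subset[of _ "Pow {1..Q} \<times> Pow {1..Q}"]) (auto simp: P_def)
  have cardP: "card P \<le> 4 ^ Q"
  proof -
    have "card P \<le> card (Pow {1..Q} \<times> Pow {1..Q})"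
      by (rule card_mono) (auto simp: P_def)
    also have "\<dots> = 4 ^ Q" by (simp add: card_cartesian_product card_Pow power_mult_distrib[symmetric])
    finally show ?thesis .
  qed
  have eachE: "measure_pmf.prob p (E st) \<le> exp (- 3 * real Q)" if st: "st \<in> P" for st
  proof -
    obtain S T where st': "st = (S, T)" by (cases st)
    have S: "S \<subseteq> {1..Q}" and T: "T \<subseteq> {1..Q}" and big: "real (card S * card T) > M"
      using st st' unfolding P_def by auto
    have "measure_pmf.prob p (E st) = (1 - \<epsilon>) ^ (card S * card T)"
      unfolding p_def st' E_def using prob_rect[OF _ assms(3) S T] assms(2) by simp
    also have "\<dots> \<le> exp (- \<epsilon>) ^ (card S * card T)"
      by (rule power_mono) (use assms(3) exp_ge_add_one_self[of "- \<epsilon>"] in auto)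
    also have "\<dots> = exp (- \<epsilon> * real (card S * card T))"
      by (simp add: exp_of_nat_mult[symmetric] mult.commute)
    also have "\<dots> \<le> exp (- 3 * real Q)"
    proof -
      have "\<epsilon> * M = 3 * real Q" unfolding M_def using assms(2) by simp
      moreover have "\<epsilon> * M \<le> \<epsilon> * real (card S * card T)"
        using big assms(2) by simp
      ultimately show ?thesis by simp
    qed
    finally show ?thesis .
  qed
  have "measure_pmf.prob p U \<le> (\<Sum>st\<in>P. measure_pmf.prob p (E st))"
    unfolding U_def by (rule measure_UNION_le[OF finP]) simp
  also have "\<dots> \<le> (\<Sum>st\<in>P. exp (- 3 * real Q))"
    by (rule sum_mono) (rule eachE)
  also have "\<dots> = real (card P) * exp (- 3 * real Q)" by simp
  also have "\<dots> \<le> 4 ^ Q * exp (- 3 * real Q)"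
    using cardP by (intro mult_right_mono) (auto simp: numeral_power_le_of_nat_cancel_iff)
  also have "\<dots> = (4 * exp (- 3)) ^ Q"
    by (simp add: power_mult_distrib exp_of_nat_mult[symmetric] mult.commute)
  also have "\<dots> \<le> (4 * exp (- 3)) ^ 2"
  proof -
    have "exp (3::real) \<ge> 1 + 3 + 3\<^sup>2 / 2" by (rule exp_lower_Taylor_quadratic) simp
    then have "4 * exp (- 3) \<le> (1::real)" by (simp add: exp_minus field_simps)
    then show ?thesis by (intro power_decreasing Q2) auto
  qed
  also have "\<dots> \<le> 1 / 4"
  proof -
    have "exp (3::real) \<ge> 1 + 3 + 3\<^sup>2 / 2" by (rule exp_lower_Taylor_quadratic) simp
    then have a: "4 * exp (- 3) \<le> (8 / 17 :: real)" by (simp add: exp_minus field_simps)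
    have "(4 * exp (- 3)) ^ 2 \<le> (8 / 17 :: real) ^ 2"
      by (rule power_mono[OF a]) simp
    then show ?thesis by (rule order_trans) (simp add: power2_eq_square)
  qed
  finally have PU: "measure_pmf.prob p U \<le> 1 / 4" .
  have "measure_pmf.prob (W_dist Q \<epsilon>) ?G = measure_pmf.prob p (erase_channel -` ?G)"
    unfolding W_dist_def p_def by simp
  also have "\<dots> \<ge> measure_pmf.prob p (UNIV - U)"
    by (rule measure_pmf.finite_measure_mono[OF sub]) simp
  finally have "measure_pmf.prob (W_dist Q \<epsilon>) ?G \<ge> measure_pmf.prob p (UNIV - U)" .
  moreover have "measure_pmf.prob p (UNIV - U) = 1 - measure_pmf.prob p U"
    using measure_pmf.prob_compl[of U p] by simp
  ultimately show ?thesis using PU unfolding Q_def by simp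
qed

end
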